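(* Let $X$ be a Banach space of analytic functions on $\mathbb{U}$ with $H_\infty\hookrightarrow X\hookrightarrow H_2$, and let $E$ be an order-continuous Banach sequence lattice with $\ell_2\hookrightarrow E\hookrightarrow\ell_\infty$. Let $\lambda=\{\lambda_n\}$ be such that the multiplier operator $M_\lambda\colon X\to E$, $M_\lambda f=\{\lambda_n\hat f(n)\}$, is a bounded operator. Then $M_\lambda\colon X\to E$ is compact if and only if \[\limsup_{n\to\infty}|\lambda_n|=0.\]
   Context: $\mathbb{U}$ is the open unit disk, $H_p$ the classical Hardy spaces on $\mathbb{U}$, $f=\sum_{n\ge0}\hat f(n)z^n$ the Taylor expansion; "$\hookrightarrow$" denotes continuous inclusion. A Banach sequence lattice on $\mathbb{Z}_+$ is a Banach space $E$ of sequences with $|y_n|\le|x_n|$ for all $n$, $x\in E$ implying $y\in E$ and $\|y\|_E\le\|x\|_E$; it is order-continuous if every nonnegative nonincreasing sequence in $E$ converging to $0$ pointwise converges to $0$ in norm. *)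

theory Defs
  imports "HOL-Analysis.Analysis" "HOL-Complex_Analysis.Complex_Analysis" "HOL-Library.Liminf_Limsup"
begin

definition taylor_coeff :: "(complex \<Rightarrow> complex) \<Rightarrow> nat \<Rightarrow> complex" where
  "taylor_coeff f n = (deriv ^^ n) f 0 / of_nat (fact n)"

(* Analytic functions on the unit disk U, represented canonically as functions vanishing outside U *)
definition analytic_U :: "(complex \<Rightarrow> complex) set" where
  "analytic_U = {f. f holomorphic_on ball 0 1 \<and> (\<forall>z. z \<notin> ball 0 1 \<longrightarrow> f z = 0)}"

definition banach_fun_space :: "('a \<Rightarrow> complex) set \<Rightarrow> (('a \<Rightarrow> complex) \<Rightarrow> real) \<Rightarrow> bool" where
  "banach_fun_space S N \<longleftrightarrow>
     (\<lambda>t. 0) \<in> S \<and> (\<forall>x\<in>S. \<forall>y\<in>S. (\<lambda>t. x t + y t) \<in> S) \<and> (\<forall>c. \<forall>x\<in>S. (\<lambda>t. c * x t) \<in> S) \<and>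
     (\<forall>x\<in>S. N x \<ge> 0) \<and> (\<forall>x\<in>S. N x = 0 \<longleftrightarrow> x = (\<lambda>t. 0)) \<and>
     (\<forall>c. \<forall>x\<in>S. N (\<lambda>t. c * x t) = cmod c * N x) \<and>
     (\<forall>x\<in>S. \<forall>y\<in>S. N (\<lambda>t. x t + y t) \<le> N x + N y) \<and>
     (\<forall>u. (\<forall>k. u k \<in> S) \<and> (\<forall>e>0. \<exists>M. \<forall>m\<ge>M. \<forall>n\<ge>M. N (\<lambda>t. u m t - u n t) < e)
          \<longrightarrow> (\<exists>v\<in>S. (\<lambda>k. N (\<lambda>t. u k t - v t)) \<longlonglongrightarrow> 0))"

definition banach_space_analytic_U :: "(complex \<Rightarrow> complex) set \<Rightarrow> ((complex \<Rightarrow> complex) \<Rightarrow> real) \<Rightarrow> bool" where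
  "banach_space_analytic_U X N \<longleftrightarrow> X \<subseteq> analytic_U \<and> banach_fun_space X N"

definition H_inf :: "(complex \<Rightarrow> complex) set" where
  "H_inf = {f \<in> analytic_U. bounded (f ` ball 0 1)}"

definition H_inf_norm :: "(complex \<Rightarrow> complex) \<Rightarrow> real" where
  "H_inf_norm f = (SUP z\<in>ball 0 1. cmod (f z))"

definition H2 :: "(complex \<Rightarrow> complex) set" where
  "H2 = {f \<in> analytic_U. summable (\<lambda>n. (cmod (taylor_coeff f n))\<^sup>2)}"

definition H2_norm :: "(complex \<Rightarrow> complex) \<Rightarrow> real" where
  "H2_norm f = sqrt (\<Sum>n. (cmod (taylor_coeff f n))\<^sup>2)"

definition H_inf_embeds :: "(complex \<Rightarrow> complex) set \<Rightarrow> ((complex \<Rightarrow> complex) \<Rightarrow> real) \<Rightarrow> bool" where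
  "H_inf_embeds X N \<longleftrightarrow> H_inf \<subseteq> X \<and> (\<exists>C. \<forall>f\<in>H_inf. N f \<le> C * H_inf_norm f)"

definition embeds_H2 :: "(complex \<Rightarrow> complex) set \<Rightarrow> ((complex \<Rightarrow> complex) \<Rightarrow> real) \<Rightarrow> bool" where
  "embeds_H2 X N \<longleftrightarrow> X \<subseteq> H2 \<and> (\<exists>C. \<forall>f\<in>X. H2_norm f \<le> C * N f)"

definition banach_seq_lattice :: "(nat \<Rightarrow> complex) set \<Rightarrow> ((nat \<Rightarrow> complex) \<Rightarrow> real) \<Rightarrow> bool" where
  "banach_seq_lattice E N \<longleftrightarrow> banach_fun_space E N \<and>
     (\<forall>x\<in>E. \<forall>y. (\<forall>n. cmod (y n) \<le> cmod (x n)) \<longrightarrow> y \<in> E \<and> N y \<le> N x)"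

definition order_continuous :: "(nat \<Rightarrow> complex) set \<Rightarrow> ((nat \<Rightarrow> complex) \<Rightarrow> real) \<Rightarrow> bool" where
  "order_continuous E N \<longleftrightarrow>
     (\<forall>u :: nat \<Rightarrow> nat \<Rightarrow> real.
        (\<forall>k. (\<lambda>n. complex_of_real (u k n)) \<in> E) \<and> (\<forall>k n. 0 \<le> u k n) \<and>
        (\<forall>k n. u (Suc k) n \<le> u k n) \<and> (\<forall>n. (\<lambda>k. u k n) \<longlonglongrightarrow> 0)
        \<longrightarrow> (\<lambda>k. N (\<lambda>n. complex_of_real (u k n))) \<longlonglongrightarrow> 0)"

definition l2_embeds :: "(nat \<Rightarrow> complex) set \<Rightarrow> ((nat \<Rightarrow> complex) \<Rightarrow> real) \<Rightarrow> bool" where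
  "l2_embeds E N \<longleftrightarrow> (\<exists>C. \<forall>x. summable (\<lambda>n. (cmod (x n))\<^sup>2) \<longrightarrow>
      x \<in> E \<and> N x \<le> C * sqrt (\<Sum>n. (cmod (x n))\<^sup>2))"

definition embeds_linf :: "(nat \<Rightarrow> complex) set \<Rightarrow> ((nat \<Rightarrow> complex) \<Rightarrow> real) \<Rightarrow> bool" where
  "embeds_linf E N \<longleftrightarrow> (\<exists>C. \<forall>x\<in>E. bounded (range x) \<and> (SUP n. cmod (x n)) \<le> C * N x)"

definition multiplier :: "(nat \<Rightarrow> complex) \<Rightarrow> (complex \<Rightarrow> complex) \<Rightarrow> (nat \<Rightarrow> complex)" where
  "multiplier lam f = (\<lambda>n. lam n * taylor_coeff f n)"

definition bounded_multiplier ::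
  "(complex \<Rightarrow> complex) set \<Rightarrow> ((complex \<Rightarrow> complex) \<Rightarrow> real) \<Rightarrow> (nat \<Rightarrow> complex) set \<Rightarrow> ((nat \<Rightarrow> complex) \<Rightarrow> real) \<Rightarrow> (nat \<Rightarrow> complex) \<Rightarrow> bool" where
  "bounded_multiplier X NX E NE lam \<longleftrightarrow>
     (\<forall>f\<in>X. multiplier lam f \<in> E) \<and> (\<exists>C. \<forall>f\<in>X. NE (multiplier lam f) \<le> C * NX f)"

definition compact_multiplier ::
  "(complex \<Rightarrow> complex) set \<Rightarrow> ((complex \<Rightarrow> complex) \<Rightarrow> real) \<Rightarrow> (nat \<Rightarrow> complex) set \<Rightarrow> ((nat \<Rightarrow> complex) \<Rightarrow> real) \<Rightarrow> (nat \<Rightarrow> complex) \<Rightarrow> bool" where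
  "compact_multiplier X NX E NE lam \<longleftrightarrow>
     (\<forall>f :: nat \<Rightarrow> complex \<Rightarrow> complex. (\<forall>k. f k \<in> X) \<and> bounded (range (\<lambda>k. NX (f k))) \<longrightarrow>
        (\<exists>r g. strict_mono r \<and> g \<in> E \<and> (\<lambda>k. NE (\<lambda>n. multiplier lam (f (r k)) n - g n)) \<longlonglongrightarrow> 0))"

end

theory Submission
  imports Defs "HOL-Library.Diagonal_Subsequence"
begin

lemma diag_conv:
  fixes c :: "nat \<Rightarrow> nat \<Rightarrow> complex"
  assumes "\<And>n. bounded (range (\<lambda>k. c k n))"
  shows "\<exists>r. strict_mono r \<and> (\<forall>n. convergent (\<lambda>k. c (r k) n))"
proof -
  interpret subseqs "\<lambda>n s. convergent (\<lambda>k. c (s k) n)"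
  proof
    fix n and s :: "nat \<Rightarrow> nat" assume "strict_mono s"
    have "bounded (range (\<lambda>k. c (s k) n))" using assms[of n] by (rule bounded_subset) auto
    then obtain l r where "strict_mono r" "((\<lambda>k. c (s k) n) \<circ> r) \<longlonglongrightarrow> l"
      using bounded_imp_convergent_subsequence by blast
    then show "\<exists>r'. strict_mono r' \<and> convergent (\<lambda>k. c ((s \<circ> r') k) n)"
      by (auto simp: convergent_def o_def)
  qed
  have "convergent (\<lambda>k. c (diagseq k) n)" for n
  proof -
    have "convergent (\<lambda>k. c ((diagseq \<circ> (+) (Suc n)) k) n)"
    proof (rule diagseq_holds)
      fix r s :: "nat \<Rightarrow> nat" and n assume "strict_mono r" "convergent (\<lambda>k. c (s k) n)"
      then show "convergent (\<lambda>k. c ((s \<circ> r) k) n)"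
        using LIMSEQ_subseq_LIMSEQ[of "\<lambda>k. c (s k) n" _ r]
        by (auto simp: convergent_def o_def)
    qed
    then have "convergent (\<lambda>k. c (diagseq (k + Suc n)) n)" by (simp add: o_def add.commute)
    then show ?thesis using convergent_ignore_initial_segment[of "\<lambda>k. c (diagseq k) n" "Suc n"] by simp
  qed
  thus ?thesis using subseq_diagseq by blast
qed

definition mono_fun :: "nat \<Rightarrow> complex \<Rightarrow> complex" where
  "mono_fun n = (\<lambda>z. if z \<in> ball 0 1 then z ^ n else 0)"

lemma mono_fun_hol: "mono_fun n holomorphic_on ball 0 1"
proof -
  have "(\<lambda>z. z ^ n) holomorphic_on ball 0 1" by (intro holomorphic_intros)
  then show ?thesis by (rule holomorphic_transform) (simp add: mono_fun_def)
qed

lemma mono_fun_Hinf: "mono_fun n \<in> H_inf"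
proof -
  have "mono_fun n ` ball 0 1 \<subseteq> cball 0 1"
    by (auto simp: mono_fun_def norm_power power_le_one)
  then have "bounded (mono_fun n ` ball 0 1)" using bounded_cball bounded_subset by blast
  then show ?thesis using mono_fun_hol
    by (auto simp: H_inf_def analytic_U_def mono_fun_def)
qed

lemma mono_fun_norm: "0 \<le> H_inf_norm (mono_fun n) \<and> H_inf_norm (mono_fun n) \<le> 1"
proof -
  have bd: "bdd_above ((\<lambda>z. cmod (mono_fun n z)) ` ball 0 1)"
    by (rule bdd_aboveI[where M=1]) (auto simp: mono_fun_def norm_power power_le_one)
  have "0 \<le> cmod (mono_fun n 0)" by simp
  also have "\<dots> \<le> H_inf_norm (mono_fun n)" unfolding H_inf_norm_def
    by (rule cSUP_upper[OF _ bd]) auto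
  finally have 1: "0 \<le> H_inf_norm (mono_fun n)" .
  have "H_inf_norm (mono_fun n) \<le> 1" unfolding H_inf_norm_def
    by (rule cSUP_least) (auto simp: mono_fun_def norm_power power_le_one)
  with 1 show ?thesis by simp
qed

lemma taylor_mono: "taylor_coeff (mono_fun n) m = (if m = n then 1 else 0)"
proof -
  have ev: "eventually (\<lambda>z. mono_fun n z = (z - 0) ^ n) (nhds 0)"
    using eventually_nhds_in_open[of "ball (0::complex) 1" 0]
    by (auto simp: mono_fun_def elim!: eventually_mono)
  have "(deriv ^^ m) (mono_fun n) 0 = (deriv ^^ m) (\<lambda>z. (z - 0) ^ n) 0"
    by (rule higher_deriv_cong_ev[OF ev]) simp
  also have "\<dots> = pochhammer (of_nat (Suc n - m)) m * (0 - 0) ^ (n - m)"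
    by (rule higher_deriv_power)
  finally have h: "(deriv ^^ m) (mono_fun n) 0 = pochhammer (of_nat (Suc n - m)) m * (0 - 0) ^ (n - m)" .
  show ?thesis
  proof (cases "m = n")
    case True
    then have "(deriv ^^ m) (mono_fun n) 0 = fact n" using h by (simp add: pochhammer_fact)
    then show ?thesis using True by (simp add: taylor_coeff_def)
  next
    case False
    show ?thesis
    proof (cases "m < n")
      case True then show ?thesis using h by (simp add: taylor_coeff_def)
    next
      case False
      with \<open>m \<noteq> n\<close> have "Suc n - m = 0" "m > 0" by auto
      then show ?thesis using h \<open>m \<noteq> n\<close> by (simp add: taylor_coeff_def pochhammer_0_left)
    qed
  qed
qed

lemma sq_diff_le: "(cmod (x - y))\<^sup>2 \<le> 2 * (cmod x)\<^sup>2 + 2 * (cmod y)\<^sup>2"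
proof -
  have "cmod (x - y) \<le> cmod x + cmod y" by (rule norm_triangle_ineq4)
  then have "(cmod (x - y))\<^sup>2 \<le> (cmod x + cmod y)\<^sup>2" by (simp add: power_mono)
  also have "\<dots> \<le> 2 * (cmod x)\<^sup>2 + 2 * (cmod y)\<^sup>2"
    using zero_le_power2[of "cmod x - cmod y"] by (simp add: power2_eq_square algebra_simps)
  finally show ?thesis .
qed

lemma l2_lemma:
  fixes F :: "nat \<Rightarrow> nat \<Rightarrow> complex" and a lam :: "nat \<Rightarrow> complex" and D :: real
  assumes hs: "\<And>k. summable (\<lambda>n. (cmod (F k n))\<^sup>2)"
    and hb: "\<And>k. (\<Sum>n. (cmod (F k n))\<^sup>2) \<le> D"
    and hc: "\<And>n. (\<lambda>k. F k n) \<longlonglongrightarrow> a n"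
    and hl: "(\<lambda>n. cmod (lam n)) \<longlonglongrightarrow> 0"
  shows "summable (\<lambda>n. (cmod (lam n * a n))\<^sup>2)"
    and "\<And>k. summable (\<lambda>n. (cmod (lam n * F k n - lam n * a n))\<^sup>2)"
    and "(\<lambda>k. \<Sum>n. (cmod (lam n * F k n - lam n * a n))\<^sup>2) \<longlonglongrightarrow> 0"
proof -
  have D0: "0 \<le> D" using hb[of 0] suminf_nonneg[OF hs[of 0]] by force
  have aN: "(\<Sum>n<N. (cmod (a n))\<^sup>2) \<le> D" for N
  proof (rule LIMSEQ_le_const2)
    show "(\<lambda>k. \<Sum>n<N. (cmod (F k n))\<^sup>2) \<longlonglongrightarrow> (\<Sum>n<N. (cmod (a n))\<^sup>2)"
      by (intro tendsto_intros hc)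
    show "\<exists>M. \<forall>k\<ge>M. (\<Sum>n<N. (cmod (F k n))\<^sup>2) \<le> D"
      using sum_le_suminf[OF hs, of "{..<N}"] hb by (meson finite_lessThan order_trans zero_le_power2)
  qed
  have sa: "summable (\<lambda>n. (cmod (a n))\<^sup>2)"
    by (rule summableI_nonneg_bounded[where x=D]) (use aN in auto)
  have suma: "(\<Sum>n. (cmod (a n))\<^sup>2) \<le> D" by (rule suminf_le_const[OF sa aN])
  obtain K where K: "K > 0" "\<And>n. norm (cmod (lam n)) \<le> K"
    using convergent_imp_Bseq[of "\<lambda>n. cmod (lam n)"] hl unfolding Bseq_def convergent_def by blast
  have L: "(cmod (lam n))\<^sup>2 \<le> K\<^sup>2" for n using K(2)[of n] by (simp add: power_mono)
  define G where "G k n = (cmod (F k n - a n))\<^sup>2" for k n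
  have G0: "0 \<le> G k n" for k n by (simp add: G_def)
  have Gle: "G k n \<le> 2 * (cmod (F k n))\<^sup>2 + 2 * (cmod (a n))\<^sup>2" for k n
    unfolding G_def by (rule sq_diff_le)
  have s2: "summable (\<lambda>n. 2 * (cmod (F k n))\<^sup>2 + 2 * (cmod (a n))\<^sup>2)" for k
    by (intro summable_add summable_mult hs sa)
  have sG: "summable (G k)" for k
    by (rule summable_comparison_test'[OF s2[of k]]) (use G0 Gle in auto)
  have sumG: "(\<Sum>n. G k n) \<le> 4 * D" for k
  proof -
    have "(\<Sum>n. G k n) \<le> (\<Sum>n. 2 * (cmod (F k n))\<^sup>2 + 2 * (cmod (a n))\<^sup>2)"
      by (rule suminf_le[OF Gle sG s2])
    also have "\<dots> = 2 * (\<Sum>n. (cmod (F k n))\<^sup>2) + 2 * (\<Sum>n. (cmod (a n))\<^sup>2)"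
      using suminf_add[OF summable_mult[OF hs, of 2] summable_mult[OF sa, of 2]]
        suminf_mult[OF hs, of 2] suminf_mult[OF sa, of 2] by simp
    also have "\<dots> \<le> 4 * D" using hb[of k] suma by simp
    finally show ?thesis .
  qed
  have eq: "(cmod (lam n * F k n - lam n * a n))\<^sup>2 = (cmod (lam n))\<^sup>2 * G k n" for k n
    by (simp add: G_def right_diff_distrib[symmetric] norm_mult power_mult_distrib)
  have H0: "0 \<le> (cmod (lam n))\<^sup>2 * G k n" for k n using G0 by simp
  show "summable (\<lambda>n. (cmod (lam n * a n))\<^sup>2)"
    by (rule summable_comparison_test'[OF summable_mult[OF sa, of "K\<^sup>2"]])
       (simp add: norm_mult power_mult_distrib mult_right_mono L)
  have sH: "summable (\<lambda>n. (cmod (lam n))\<^sup>2 * G k n)" for k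
    by (rule summable_comparison_test'[OF summable_mult[OF sG[of k], of "K\<^sup>2"]])
       (use G0 L in \<open>auto intro: mult_right_mono\<close>)
  show "summable (\<lambda>n. (cmod (lam n * F k n - lam n * a n))\<^sup>2)" for k
    unfolding eq by (rule sH)
  show "(\<lambda>k. \<Sum>n. (cmod (lam n * F k n - lam n * a n))\<^sup>2) \<longlonglongrightarrow> 0"
    unfolding eq
  proof (rule LIMSEQ_I)
    fix r :: real assume r: "0 < r"
    define \<eta> where "\<eta> = r / (2 * (4 * D + 1))"
    have \<eta>0: "0 < \<eta>" using r D0 by (simp add: \<eta>_def)
    obtain N where N: "\<And>n. n \<ge> N \<Longrightarrow> cmod (lam n) < sqrt \<eta>"
      using hl \<eta>0 unfolding LIMSEQ_iff by (metis diff_zero norm_ge_zero real_norm_def real_sqrt_gt_zero abs_of_nonneg)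
    have lN: "(cmod (lam n))\<^sup>2 \<le> \<eta>" if "n \<ge> N" for n
    proof -
      have "(cmod (lam n))\<^sup>2 \<le> (sqrt \<eta>)\<^sup>2" using N[OF that] by (intro power_mono) auto
      then show ?thesis using \<eta>0 by simp
    qed
    have "(\<lambda>k. \<Sum>n<N. (cmod (lam n))\<^sup>2 * G k n) \<longlonglongrightarrow> (\<Sum>n<N. (cmod (lam n))\<^sup>2 * (cmod (a n - a n))\<^sup>2)"
      unfolding G_def by (intro tendsto_intros hc)
    then have "(\<lambda>k. \<Sum>n<N. (cmod (lam n))\<^sup>2 * G k n) \<longlonglongrightarrow> 0" by simp
    then obtain M where M: "\<And>k. k \<ge> M \<Longrightarrow> norm ((\<Sum>n<N. (cmod (lam n))\<^sup>2 * G k n) - 0) < r / 2"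
      using r unfolding LIMSEQ_iff by (metis half_gt_zero)
    show "\<exists>no. \<forall>k\<ge>no. norm ((\<Sum>n. (cmod (lam n))\<^sup>2 * G k n) - 0) < r"
    proof (intro exI allI impI)
      fix k assume k: "k \<ge> M"
      have split: "(\<Sum>n. (cmod (lam n))\<^sup>2 * G k n) = (\<Sum>n. (cmod (lam (n + N)))\<^sup>2 * G k (n + N)) + (\<Sum>n<N. (cmod (lam n))\<^sup>2 * G k n)"
        by (rule suminf_split_initial_segment[OF sH])
      have splitG: "(\<Sum>n. G k n) = (\<Sum>n. G k (n + N)) + (\<Sum>n<N. G k n)"
        by (rule suminf_split_initial_segment[OF sG])
      have "(\<Sum>n<N. G k n) \<ge> 0" using G0 by (simp add: sum_nonneg)
      then have tG: "(\<Sum>n. G k (n + N)) \<le> 4 * D" using splitG sumG[of k] by linarith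
      have "(\<Sum>n. (cmod (lam (n + N)))\<^sup>2 * G k (n + N)) \<le> (\<Sum>n. \<eta> * G k (n + N))"
      proof (rule suminf_le)
        show "(cmod (lam (n + N)))\<^sup>2 * G k (n + N) \<le> \<eta> * G k (n + N)" for n
          using lN[of "n + N"] G0[of k "n + N"] by (simp add: mult_right_mono)
        show "summable (\<lambda>n. (cmod (lam (n + N)))\<^sup>2 * G k (n + N))"
          by (rule summable_ignore_initial_segment[OF sH])
        show "summable (\<lambda>n. \<eta> * G k (n + N))"
          by (rule summable_mult[OF summable_ignore_initial_segment[OF sG]])
      qed
      also have "\<dots> = \<eta> * (\<Sum>n. G k (n + N))"
        by (rule suminf_mult[OF summable_ignore_initial_segment[OF sG]])
      also have "\<dots> \<le> \<eta> * (4 * D)" using tG \<eta>0 by (simp add: mult_left_mono)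
      also have "\<dots> < r / 2" using r D0 by (simp add: \<eta>_def field_simps)
      finally have t: "(\<Sum>n. (cmod (lam (n + N)))\<^sup>2 * G k (n + N)) < r / 2" .
      have h: "(\<Sum>n<N. (cmod (lam n))\<^sup>2 * G k n) < r / 2" using M[OF k] by simp
      have nn: "0 \<le> (\<Sum>n. (cmod (lam n))\<^sup>2 * G k n)" by (rule suminf_nonneg[OF sH H0])
      show "norm ((\<Sum>n. (cmod (lam n))\<^sup>2 * G k n) - 0) < r"
        using split t h nn by simp
    qed
  qed
qed

lemma limsup_zero_iff:
  fixes lam :: "nat \<Rightarrow> complex"
  shows "limsup (\<lambda>n. ereal (cmod (lam n))) = 0 \<longleftrightarrow> (\<lambda>n. cmod (lam n)) \<longlonglongrightarrow> 0"
proof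
  assume h: "limsup (\<lambda>n. ereal (cmod (lam n))) = 0"
  have "0 \<le> liminf (\<lambda>n. ereal (cmod (lam n)))" by (rule Liminf_bounded) auto
  moreover have "liminf (\<lambda>n. ereal (cmod (lam n))) \<le> limsup (\<lambda>n. ereal (cmod (lam n)))"
    by (rule Liminf_le_Limsup) simp
  ultimately have "liminf (\<lambda>n. ereal (cmod (lam n))) = 0" using h by simp
  then have "(\<lambda>n. ereal (cmod (lam n))) \<longlonglongrightarrow> 0" using h by (intro Liminf_eq_Limsup) auto
  then show "(\<lambda>n. cmod (lam n)) \<longlonglongrightarrow> 0" by (simp add: zero_ereal_def lim_ereal)
next
  assume "(\<lambda>n. cmod (lam n)) \<longlonglongrightarrow> 0"
  then have "(\<lambda>n. ereal (cmod (lam n))) \<longlonglongrightarrow> 0" by (simp add: zero_ereal_def lim_ereal)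
  then show "limsup (\<lambda>n. ereal (cmod (lam n))) = 0" by (intro lim_imp_Limsup) auto
qed

lemma imp_compact:
  assumes emb: "embeds_H2 X NX" and bX: "banach_space_analytic_U X NX"
    and l2: "l2_embeds E NE" and lat: "banach_seq_lattice E NE"
    and hl: "(\<lambda>n. cmod (lam n)) \<longlonglongrightarrow> 0"
  shows "compact_multiplier X NX E NE lam"
  unfolding compact_multiplier_def
proof (intro allI impI)
  fix f :: "nat \<Rightarrow> complex \<Rightarrow> complex"
  assume "(\<forall>k. f k \<in> X) \<and> bounded (range (\<lambda>k. NX (f k)))"
  then have fX: "\<And>k. f k \<in> X" and bd: "bounded (range (\<lambda>k. NX (f k)))" by auto
  obtain B where B: "\<And>k. norm (NX (f k)) \<le> B" using bd unfolding bounded_iff by auto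
  obtain C2 where XH2: "X \<subseteq> H2" and C2: "\<And>g. g \<in> X \<Longrightarrow> H2_norm g \<le> C2 * NX g"
    using emb unfolding embeds_H2_def by auto
  have NX0: "\<And>g. g \<in> X \<Longrightarrow> 0 \<le> NX g"
    using bX unfolding banach_space_analytic_U_def banach_fun_space_def by auto
  obtain Cl where Cl: "\<And>x. summable (\<lambda>n. (cmod (x n))\<^sup>2) \<Longrightarrow> x \<in> E \<and> NE x \<le> Cl * sqrt (\<Sum>n. (cmod (x n))\<^sup>2)"
    using l2 unfolding l2_embeds_def by auto
  have NE0: "\<And>x. x \<in> E \<Longrightarrow> 0 \<le> NE x"
    using lat unfolding banach_seq_lattice_def banach_fun_space_def by auto
  define Dh where "Dh = \<bar>C2\<bar> * B"
  define c where "c k n = taylor_coeff (f k) n" for k n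
  have sc: "summable (\<lambda>n. (cmod (c k n))\<^sup>2)" for k
    using XH2 fX[of k] unfolding H2_def c_def by auto
  have hn: "H2_norm (f k) \<le> Dh" for k
  proof -
    have "H2_norm (f k) \<le> C2 * NX (f k)" by (rule C2[OF fX])
    also have "\<dots> \<le> \<bar>C2\<bar> * NX (f k)" using NX0[OF fX[of k]] by (simp add: mult_right_mono)
    also have "\<dots> \<le> \<bar>C2\<bar> * B" using B[of k] NX0[OF fX[of k]] by (simp add: mult_left_mono)
    finally show ?thesis by (simp add: Dh_def)
  qed
  have sumc: "(\<Sum>n. (cmod (c k n))\<^sup>2) \<le> Dh\<^sup>2" for k
  proof -
    have s0: "0 \<le> (\<Sum>n. (cmod (c k n))\<^sup>2)" by (rule suminf_nonneg[OF sc]) simp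
    have "sqrt (\<Sum>n. (cmod (c k n))\<^sup>2) \<le> Dh" using hn[of k] by (simp add: H2_norm_def c_def)
    then have "(sqrt (\<Sum>n. (cmod (c k n))\<^sup>2))\<^sup>2 \<le> Dh\<^sup>2"
      by (rule power_mono[OF _ real_sqrt_ge_zero[OF s0]])
    then show ?thesis using s0 by simp
  qed
  have cb: "cmod (c k n) \<le> Dh" for k n
  proof -
    have "(cmod (c k n))\<^sup>2 \<le> (\<Sum>n. (cmod (c k n))\<^sup>2)"
      using sum_le_suminf[OF sc, of "{n}"] by simp
    also have "\<dots> \<le> Dh\<^sup>2" by (rule sumc)
    finally have "(cmod (c k n))\<^sup>2 \<le> Dh\<^sup>2" .
    moreover have "0 \<le> Dh" using order_trans[OF norm_ge_zero B[of 0]] by (simp add: Dh_def)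
    ultimately show ?thesis by (rule power2_le_imp_le)
  qed
  have "bounded (range (\<lambda>k. c k n))" for n
    unfolding bounded_iff using cb by (intro exI[of _ Dh]) auto
  then obtain r where r: "strict_mono r" and conv: "\<And>n. convergent (\<lambda>k. c (r k) n)"
    using diag_conv[of c] by blast
  define a where "a n = lim (\<lambda>k. c (r k) n)" for n
  have hc: "(\<lambda>k. c (r k) n) \<longlonglongrightarrow> a n" for n
    using conv[of n] by (simp add: a_def convergent_LIMSEQ_iff)
  note L = l2_lemma[where F = "\<lambda>k. c (r k)" and D = "Dh\<^sup>2" and a = a and lam = lam,
      OF sc sumc hc hl]
  define g where "g n = lam n * a n" for n
  have gE: "g \<in> E" using Cl[OF L(1)] unfolding g_def[abs_def] by simp
  define S where "S k = (\<Sum>n. (cmod (lam n * c (r k) n - lam n * a n))\<^sup>2)" for k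
  have xk: "(\<lambda>n. multiplier lam (f (r k)) n - g n) = (\<lambda>n. lam n * c (r k) n - lam n * a n)" for k
    by (simp add: multiplier_def g_def c_def)
  have up: "NE (\<lambda>n. multiplier lam (f (r k)) n - g n) \<le> Cl * sqrt (S k)" for k
    using Cl[OF L(2)[of k]] by (simp add: xk S_def)
  have lo: "0 \<le> NE (\<lambda>n. multiplier lam (f (r k)) n - g n)" for k
    using Cl[OF L(2)[of k]] NE0 by (simp add: xk)
  have S3: "S \<longlonglongrightarrow> 0" unfolding S_def[abs_def] by (rule L(3))
  have "(\<lambda>k. Cl * sqrt (S k)) \<longlonglongrightarrow> Cl * sqrt 0"
    by (intro tendsto_mult_left tendsto_real_sqrt S3)
  then have Sl: "(\<lambda>k. Cl * sqrt (S k)) \<longlonglongrightarrow> 0" by simp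
  have "(\<lambda>k. NE (\<lambda>n. multiplier lam (f (r k)) n - g n)) \<longlonglongrightarrow> 0"
  proof (rule tendsto_sandwich[of "\<lambda>k. 0" _ sequentially "\<lambda>k. Cl * sqrt (S k)" 0])
    show "\<forall>\<^sub>F k in sequentially. 0 \<le> NE (\<lambda>n. multiplier lam (f (r k)) n - g n)"
      using lo by (simp add: always_eventually)
    show "\<forall>\<^sub>F k in sequentially. NE (\<lambda>n. multiplier lam (f (r k)) n - g n) \<le> Cl * sqrt (S k)"
      using up by (simp add: always_eventually)
  qed (auto intro: Sl)
  then show "\<exists>r g. strict_mono r \<and> g \<in> E \<and> (\<lambda>k. NE (\<lambda>n. multiplier lam (f (r k)) n - g n)) \<longlonglongrightarrow> 0"
    using r gE by blast
qed

lemma compact_imp: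
  assumes hinf: "H_inf_embeds X NX" and bX: "banach_space_analytic_U X NX"
    and lat: "banach_seq_lattice E NE" and linf: "embeds_linf E NE"
    and bm: "bounded_multiplier X NX E NE lam" and cm: "compact_multiplier X NX E NE lam"
  shows "limsup (\<lambda>n. ereal (cmod (lam n))) = 0"
proof -
  define u where "u n = ereal (cmod (lam n))" for n
  obtain s where s: "strict_mono s" and su: "(u \<circ> s) \<longlonglongrightarrow> limsup u"
    using limsup_subseq_lim by blast
  obtain Ci where HX: "H_inf \<subseteq> X" and Ci: "\<And>h. h \<in> H_inf \<Longrightarrow> NX h \<le> Ci * H_inf_norm h"
    using hinf unfolding H_inf_embeds_def by auto
  have NX0: "\<And>g. g \<in> X \<Longrightarrow> 0 \<le> NX g"
    using bX unfolding banach_space_analytic_U_def banach_fun_space_def by auto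
  have bf: "banach_fun_space E NE" using lat unfolding banach_seq_lattice_def by auto
  define f where "f k = mono_fun (s k)" for k
  have fX: "f k \<in> X" for k using HX mono_fun_Hinf by (auto simp: f_def)
  have fb: "norm (NX (f k)) \<le> \<bar>Ci\<bar>" for k
  proof -
    have h: "0 \<le> H_inf_norm (f k)" "H_inf_norm (f k) \<le> 1" using mono_fun_norm by (auto simp: f_def)
    have "NX (f k) \<le> Ci * H_inf_norm (f k)" using Ci mono_fun_Hinf by (simp add: f_def)
    also have "\<dots> \<le> \<bar>Ci\<bar> * H_inf_norm (f k)" using h by (simp add: mult_right_mono)
    also have "\<dots> \<le> \<bar>Ci\<bar>" using h by (simp add: mult_left_le)
    finally show ?thesis using NX0[OF fX[of k]] by simp
  qed
  have "bounded (range (\<lambda>k. NX (f k)))"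
    unfolding bounded_iff using fb by (intro exI[of _ "\<bar>Ci\<bar>"]) auto
  then obtain r g where r: "strict_mono r" and gE: "g \<in> E"
    and lim: "(\<lambda>k. NE (\<lambda>n. multiplier lam (f (r k)) n - g n)) \<longlonglongrightarrow> 0"
    using cm fX unfolding compact_multiplier_def by blast
  define x where "x k n = multiplier lam (f (r k)) n - g n" for k n
  have xval: "x k n = (if n = s (r k) then lam n else 0) - g n" for k n
    by (simp add: x_def multiplier_def f_def taylor_mono)
  have xE: "x k \<in> E" for k
  proof -
    have m: "multiplier lam (f (r k)) \<in> E" using bm fX unfolding bounded_multiplier_def by auto
    have "(\<lambda>t. (-1) * g t) \<in> E" using bf gE unfolding banach_fun_space_def by blast
    moreover have add: "\<And>x y. x \<in> E \<Longrightarrow> y \<in> E \<Longrightarrow> (\<lambda>t. x t + y t) \<in> E"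
      using bf unfolding banach_fun_space_def by blast
    ultimately have "(\<lambda>t. multiplier lam (f (r k)) t + (\<lambda>t. (-1) * g t) t) \<in> E"
      by (intro add[OF m])
    then show ?thesis by (simp add: x_def[abs_def])
  qed
  obtain Cinf where Cinf: "\<And>y. y \<in> E \<Longrightarrow> bounded (range y) \<and> (SUP n. cmod (y n)) \<le> Cinf * NE y"
    using linf unfolding embeds_linf_def by auto
  define t where "t k = Cinf * NE (x k)" for k
  have tl: "t \<longlonglongrightarrow> 0"
    using tendsto_mult_left[OF lim, of Cinf] by (simp add: t_def[abs_def] x_def[abs_def])
  have xt: "cmod (x k n) \<le> t k" for k n
  proof -
    from Cinf[OF xE[of k]] obtain K where K: "\<And>n. cmod (x k n) \<le> K"
      and sup: "(SUP n. cmod (x k n)) \<le> t k"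
      unfolding bounded_iff t_def by auto
    have "cmod (x k n) \<le> (SUP n. cmod (x k n))"
      by (rule cSUP_upper) (auto intro: bdd_aboveI2 K)
    with sup show ?thesis by simp
  qed
  have xto: "(\<lambda>k. x k n) \<longlonglongrightarrow> 0" for n
    by (rule Lim_null_comparison[OF always_eventually tl]) (use xt in auto)
  have sr: "strict_mono (s \<circ> r)" using s r by (rule strict_mono_o)
  have g0: "g n = 0" for n
  proof -
    have ev: "eventually (\<lambda>k. x k n = - g n) sequentially"
    proof (rule eventually_sequentiallyI[of "Suc n"])
      fix k assume "Suc n \<le> k"
      moreover have "k \<le> (s \<circ> r) k" by (rule seq_suble[OF sr])
      ultimately have "s (r k) \<noteq> n" by simp
      then show "x k n = - g n" by (simp add: xval)
    qed
    have "(\<lambda>k. x k n) \<longlonglongrightarrow> - g n" by (rule tendsto_eventually[OF ev])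
    with xto[of n] have "- g n = 0" using LIMSEQ_unique by blast
    thus ?thesis by simp
  qed
  have "(\<lambda>k. cmod (lam (s (r k)))) \<longlonglongrightarrow> 0"
  proof (rule Lim_null_comparison[OF always_eventually tl], intro allI)
    fix k show "norm (cmod (lam (s (r k)))) \<le> t k"
      using xt[of k "s (r k)"] by (simp add: xval g0)
  qed
  then have "(\<lambda>k. u (s (r k))) \<longlonglongrightarrow> 0" by (simp add: u_def zero_ereal_def lim_ereal)
  moreover have "(\<lambda>k. u (s (r k))) \<longlonglongrightarrow> limsup u"
    using LIMSEQ_subseq_LIMSEQ[OF su r] by (simp add: o_def)
  ultimately have "limsup u = 0" using LIMSEQ_unique by blast
  then show ?thesis by (simp add: u_def[abs_def])
qed

theorem theorem2p5:
  fixes X :: "(complex \<Rightarrow> complex) set" and NX :: "(complex \<Rightarrow> complex) \<Rightarrow> real"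
    and E :: "(nat \<Rightarrow> complex) set" and NE :: "(nat \<Rightarrow> complex) \<Rightarrow> real"
    and lam :: "nat \<Rightarrow> complex"
  assumes "banach_space_analytic_U X NX"
    and "H_inf_embeds X NX"
    and "embeds_H2 X NX"
    and "banach_seq_lattice E NE"
    and "order_continuous E NE"
    and "l2_embeds E NE"
    and "embeds_linf E NE"
    and "bounded_multiplier X NX E NE lam"
  shows "compact_multiplier X NX E NE lam \<longleftrightarrow> limsup (\<lambda>n. ereal (cmod (lam n))) = 0"
proof
  assume "compact_multiplier X NX E NE lam"
  then show "limsup (\<lambda>n. ereal (cmod (lam n))) = 0"
    using compact_imp[OF assms(2,1,4,7,8)] by blast
next
  assume "limsup (\<lambda>n. ereal (cmod (lam n))) = 0"
  then have "(\<lambda>n. cmod (lam n)) \<longlonglongrightarrow> 0" by (simp add: limsup_zero_iff)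
  then show "compact_multiplier X NX E NE lam"
    using imp_compact[OF assms(3,1,6,4)] by blast
qed

end
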